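(* If $R$ is a saturated transfer system on a finite modular lattice $M$, then the set $R_{cov}$ of covering relations of $M$ contained in $R$ is a saturated cover.
   Context: A lattice $M$ is modular if $a\le b$ implies $a\vee(x\wedge b)=(a\vee x)\wedge b$. A transfer system on a finite lattice $(P,\le)$ is a partial order $R$ refining $\le$ closed under restriction: $x\,R\,z$ and $y\le z$ imply $(x\wedge y)\,R\,y$; it is saturated if $x\,R\,y$, $y\le z$ and $x\,R\,z$ imply $y\,R\,z$. A covering diamond is a quadruple $x,y,x\wedge y,x\vee y$ with $x\ne y$ such that $x\vee y$ covers $x$ and $y$ and both $x,y$ cover $x\wedge y$. A saturated cover on $M$ is a set $Q$ of covering relations of $M$ such that (1) for all $x,y$, if $x\,Q\,(x\vee y)$ then $(x\wedge y)\,Q\,y$; (2) for every covering diamond, if three of its four covering relations lie in $Q$, so does the fourth. *)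

theory Defs
  imports Main
begin

definition modular_lattice :: "'a::lattice itself \<Rightarrow> bool" where
  "modular_lattice _ \<longleftrightarrow>
     (\<forall>a b x :: 'a. a \<le> b \<longrightarrow> sup a (inf x b) = inf (sup a x) b)"

definition covers :: "'a::order \<Rightarrow> 'a \<Rightarrow> bool" where
  "covers x y \<longleftrightarrow> x < y \<and> \<not> (\<exists>z. x < z \<and> z < y)"

definition transfer_system :: "('a::lattice \<Rightarrow> 'a \<Rightarrow> bool) \<Rightarrow> bool" where
  "transfer_system R \<longleftrightarrow>
     (\<forall>x. R x x) \<and>
     (\<forall>x y. R x y \<longrightarrow> R y x \<longrightarrow> x = y) \<and>
     (\<forall>x y z. R x y \<longrightarrow> R y z \<longrightarrow> R x z) \<and>
     (\<forall>x y. R x y \<longrightarrow> x \<le> y) \<and>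
     (\<forall>x y z. R x z \<longrightarrow> y \<le> z \<longrightarrow> R (inf x y) y)"

definition saturated :: "('a::lattice \<Rightarrow> 'a \<Rightarrow> bool) \<Rightarrow> bool" where
  "saturated R \<longleftrightarrow> (\<forall>x y z. R x y \<longrightarrow> y \<le> z \<longrightarrow> R x z \<longrightarrow> R y z)"

definition covering_diamond :: "'a::lattice \<Rightarrow> 'a \<Rightarrow> bool" where
  "covering_diamond x y \<longleftrightarrow> x \<noteq> y \<and>
     covers x (sup x y) \<and> covers y (sup x y) \<and>
     covers (inf x y) x \<and> covers (inf x y) y"

definition saturated_cover :: "('a::lattice \<times> 'a) set \<Rightarrow> bool" where
  "saturated_cover Q \<longleftrightarrow>
     (\<forall>(a, b) \<in> Q. covers a b) \<and>
     (\<forall>x y. (x, sup x y) \<in> Q \<longrightarrow> (inf x y, y) \<in> Q) \<and>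
     (\<forall>x y. covering_diamond x y \<longrightarrow>
        (let D = {(inf x y, x), (inf x y, y), (x, sup x y), (y, sup x y)}
         in card (D \<inter> Q) \<ge> 3 \<longrightarrow> D \<subseteq> Q))"

definition cov_part :: "('a::lattice \<Rightarrow> 'a \<Rightarrow> bool) \<Rightarrow> ('a \<times> 'a) set" where
  "cov_part R = {(a, b). covers a b \<and> R a b}"

end

theory Submission
  imports Defs
begin

lemma two_miss:
  assumes "card (D \<inter> Q) \<ge> 3" "card D \<le> 4" "finite D" "p \<in> D" "q \<in> D" "p \<noteq> q"
  shows "p \<in> Q \<or> q \<in> Q"
proof (rule ccontr)
  assume "\<not> (p \<in> Q \<or> q \<in> Q)"
  then have "D \<inter> Q \<subseteq> D - {p,q}" by auto
  then have "card (D \<inter> Q) \<le> card (D - {p,q})" using assms(3) by (simp add: card_mono)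
  also have "card (D - {p,q}) = card D - 2" using assms by (simp add: card_Diff_subset)
  finally show False using assms by linarith
qed

lemma card4: "card {a,b,c,d::'x} \<le> 4"
  using card_length[of "[a,b,c,d]"] by simp

lemma mod_cov:
  fixes x y :: "'a::lattice"
  assumes m: "modular_lattice TYPE('a)" and c: "covers x (sup x y)"
  shows "covers (inf x y) y"
proof -
  have M: "\<And>a b z::'a. a \<le> b \<Longrightarrow> sup a (inf z b) = inf (sup a z) b"
    using m unfolding modular_lattice_def by blast
  have lt: "inf x y < y"
  proof (rule ccontr)
    assume "\<not> inf x y < y"
    then have "y \<le> x" using inf_le2 less_le by (metis inf.absorb_iff2)
    then have "sup x y = x" by (simp add: sup.absorb1)
    then show False using c unfolding covers_def by simp
  qed
  moreover have "\<not> (\<exists>z. inf x y < z \<and> z < y)"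
  proof
    assume "\<exists>z. inf x y < z \<and> z < y"
    then obtain z where z1: "inf x y < z" and z2: "z < y" by blast
    have "x \<le> sup x z" by simp
    have "sup x z \<le> sup x y" using z2 by (simp add: le_supI2 less_imp_le)
    show False
    proof (cases "sup x z = x")
      case True
      then have "z \<le> x" by (metis sup.cobounded2)
      then have "z \<le> inf x y" using z2 by simp
      then show False using z1 by (metis less_le_not_le)
    next
      case False
      then have "x < sup x z" by (simp add: less_le)
      then have "sup x z = sup x y"
        using c \<open>sup x z \<le> sup x y\<close> unfolding covers_def by (metis less_le)
      have "sup z (inf x y) = inf (sup z x) y" using M[of z y x] z2 by simp
      also have "\<dots> = y" using \<open>sup x z = sup x y\<close> by (metis sup_commute inf.absorb2 sup.cobounded2)
      finally have "z = y" using z1 by (simp add: sup.absorb1 less_imp_le)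
      then show False using z2 by simp
    qed
  qed
  ultimately show ?thesis unfolding covers_def by blast
qed

theorem proposition3p6:
  fixes R :: "'a::{finite, lattice} \<Rightarrow> 'a \<Rightarrow> bool"
  assumes "modular_lattice TYPE('a)"
    and "transfer_system R"
    and "saturated R"
  shows "saturated_cover (cov_part R)"
proof -
  have tr: "\<And>x y z. R x y \<Longrightarrow> R y z \<Longrightarrow> R x z"
    and res: "\<And>x y z. R x z \<Longrightarrow> y \<le> z \<Longrightarrow> R (inf x y) y"
    using assms(2) unfolding transfer_system_def by metis+
  have sat: "\<And>x y z. R x y \<Longrightarrow> y \<le> z \<Longrightarrow> R x z \<Longrightarrow> R y z"
    using assms(3) unfolding saturated_def by blast
  have A: "\<forall>(a, b) \<in> cov_part R. covers a b" unfolding cov_part_def by auto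
  have B: "\<forall>x y. (x, sup x y) \<in> cov_part R \<longrightarrow> (inf x y, y) \<in> cov_part R"
  proof (intro allI impI)
    fix x y :: 'a
    assume "(x, sup x y) \<in> cov_part R"
    then have h1: "covers x (sup x y)" and h2: "R x (sup x y)" unfolding cov_part_def by auto
    have "covers (inf x y) y" using mod_cov[OF assms(1) h1] .
    moreover have "R (inf x y) y" using res[OF h2] by simp
    ultimately show "(inf x y, y) \<in> cov_part R" unfolding cov_part_def by simp
  qed
  have C: "\<forall>x y. covering_diamond x y \<longrightarrow>
        (let D = {(inf x y, x), (inf x y, y), (x, sup x y), (y, sup x y)}
         in card (D \<inter> cov_part R) \<ge> 3 \<longrightarrow> D \<subseteq> cov_part R)"
  proof (intro allI impI)
    fix x y :: 'a
    assume d: "covering_diamond x y"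
    define a where "a = inf x y"
    define b where "b = sup x y"
    have cv: "covers a x" "covers a y" "covers x b" "covers y b" "x \<noteq> y"
      using d unfolding covering_diamond_def a_def b_def by auto
    have ne: "a \<noteq> x" "a \<noteq> y" "x \<noteq> b" "y \<noteq> b"
      using cv unfolding covers_def by auto
    have mem: "\<And>u v. covers u v \<Longrightarrow> ((u,v) \<in> cov_part R) = R u v"
      unfolding cov_part_def by auto
    have le: "a \<le> x" "a \<le> y" "x \<le> b" "y \<le> b" unfolding a_def b_def by auto
    have ix: "inf a x = a" "inf a y = a" using le by (auto simp: inf.absorb1)
    show "let D = {(inf x y, x), (inf x y, y), (x, sup x y), (y, sup x y)}
         in card (D \<inter> cov_part R) \<ge> 3 \<longrightarrow> D \<subseteq> cov_part R"
      unfolding Let_def a_def[symmetric] b_def[symmetric]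
    proof
      let ?D = "{(a, x), (a, y), (x, b), (y, b)}"
      assume c3: "card (?D \<inter> cov_part R) \<ge> 3"
      have tm: "\<And>p q. p \<in> ?D \<Longrightarrow> q \<in> ?D \<Longrightarrow> p \<noteq> q \<Longrightarrow> p \<in> cov_part R \<or> q \<in> cov_part R"
        using two_miss[OF c3 card4] by blast
      have t1: "R a x \<or> R a y" using tm[of "(a,x)" "(a,y)"] cv(5) mem[OF cv(1)] mem[OF cv(2)] by simp
      have t2: "R a x \<or> R x b" using tm[of "(a,x)" "(x,b)"] ne(1) mem[OF cv(1)] mem[OF cv(3)] by simp
      have t3: "R a x \<or> R y b" using tm[of "(a,x)" "(y,b)"] ne(2) mem[OF cv(1)] mem[OF cv(4)] by simp
      have t4: "R a y \<or> R x b" using tm[of "(a,y)" "(x,b)"] ne(1) mem[OF cv(2)] mem[OF cv(3)] by simp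
      have t5: "R a y \<or> R y b" using tm[of "(a,y)" "(y,b)"] ne(2) mem[OF cv(2)] mem[OF cv(4)] by simp
      have t6: "R x b \<or> R y b" using tm[of "(x,b)" "(y,b)"] cv(5) mem[OF cv(3)] mem[OF cv(4)] by simp
      have g1: "R a x" "R a y" "R x b" "R y b"
      proof -
        have f1: "R a y \<Longrightarrow> R y b \<Longrightarrow> R a x"
          using tr[of a y b] res[of a b x] le ix by auto
        have f2: "R a x \<Longrightarrow> R x b \<Longrightarrow> R a y"
          using tr[of a x b] res[of a b y] le ix by auto
        have f3: "R a x \<Longrightarrow> R a y \<Longrightarrow> R y b \<Longrightarrow> R x b"
          using tr[of a y b] sat[of a x b] le by auto
        have f4: "R a x \<Longrightarrow> R a y \<Longrightarrow> R x b \<Longrightarrow> R y b"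
          using tr[of a x b] sat[of a y b] le by auto
        show "R a x" "R a y" "R x b" "R y b"
          using f1 f2 f3 f4 t1 t2 t3 t4 t5 t6 by argo+
      qed
      show "?D \<subseteq> cov_part R" using g1 mem[OF cv(1)] mem[OF cv(2)] mem[OF cv(3)] mem[OF cv(4)] by simp
    qed
  qed
  show ?thesis unfolding saturated_cover_def using A B C by blast
qed

end
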